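(* Let $(G_n)_{n\in\mathbb{N}}$ be an $\mathrm{FO}$-convergent sequence of finite graphs with modeling limit $L$, and let $\xi(x)$ be a formula in the language of graphs with one free variable such that $\xi(L)$ is finite and nonempty, $\xi(L)$ contains no nonempty proper subset of the form $\chi(L)$ for a formula $\chi(x)$ in the language of graphs, and $|\xi(G_n)|=|\xi(L)|$ for every $n$. Then for every formula $\phi$ with $p$ free variables ($p\ge 0$) in the language of rooted graphs there exist a sequence $(r_n)$ with $r_n\in\xi(G_n)$ and a vertex $r\in\xi(L)$ such that $\lim_{n\to\infty}\langle\phi,(G_n,r_n)\rangle=\langle\phi,(L,r)\rangle$.
   Context: Graphs are first-order structures in the language with one binary (edge) relation. For a formula $\phi$ with $p$ free variables and a structure $G$, $\phi(G)=\{\mathbf{v}\in V(G)^p : G\models\phi(\mathbf{v})\}$. The Stone pairing of $\phi$ ($p\ge1$) with a finite graph $G$ is $\langle\phi,G\rangle=|\phi(G)|/|V(G)|^p$; for sentences it is $1$ if $G\models\phi$ and $0$ otherwise. A sequence of finite graphs is $\mathrm{FO}$-convergent if $(\langle\phi,G_n\rangle)$ converges for every formula $\phi$. A modeling is a graph $L$ whose vertex set is a standard Borel space with a probability measure $\nu$ such that every first-order definable set $\phi(L)\subseteq V(L)^p$ is measurable; $\langle\phi,L\rangle=\nu^{\otimes p}(\phi(L))$ (and $1$/$0$ for sentences). $L$ is a modeling limit of $(G_n)$ if $\lim_n\langle\phi,G_n\rangle=\langle\phi,L\rangle$ for all $\phi$. The language of rooted graphs adds a constant symbol $\mathrm{Root}$;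 $(G,r)$ is $G$ with $\mathrm{Root}$ interpreted as $r$, and Stone pairings with rooted structures are defined in the same way. *)

theory Defs
  imports "HOL-Probability.Probability"
begin

datatype fterm = Var nat | Root

datatype fform =
    FEq fterm fterm
  | FAdj fterm fterm
  | FNeg fform
  | FConj fform fform
  | FEx nat fform

fun tfv :: "fterm \<Rightarrow> nat set" where
  "tfv (Var i) = {i}"
| "tfv Root = {}"

fun fv :: "fform \<Rightarrow> nat set" where
  "fv (FEq s t) = tfv s \<union> tfv t"
| "fv (FAdj s t) = tfv s \<union> tfv t"
| "fv (FNeg f) = fv f"
| "fv (FConj f g) = fv f \<union> fv g"
| "fv (FEx i f) = fv f - {i}"

fun troot_free :: "fterm \<Rightarrow> bool" where
  "troot_free (Var i) = True"
| "troot_free Root = False"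

fun graph_formula :: "fform \<Rightarrow> bool" where
  "graph_formula (FEq s t) = (troot_free s \<and> troot_free t)"
| "graph_formula (FAdj s t) = (troot_free s \<and> troot_free t)"
| "graph_formula (FNeg f) = graph_formula f"
| "graph_formula (FConj f g) = (graph_formula f \<and> graph_formula g)"
| "graph_formula (FEx i f) = graph_formula f"

fun teval :: "'v \<Rightarrow> (nat \<Rightarrow> 'v) \<Rightarrow> fterm \<Rightarrow> 'v" where
  "teval r a (Var i) = a i"
| "teval r a Root = r"

fun sat :: "'v set \<Rightarrow> ('v \<Rightarrow> 'v \<Rightarrow> bool) \<Rightarrow> 'v \<Rightarrow> (nat \<Rightarrow> 'v) \<Rightarrow> fform \<Rightarrow> bool" where
  "sat V E r a (FEq s t) = (teval r a s = teval r a t)"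
| "sat V E r a (FAdj s t) = E (teval r a s) (teval r a t)"
| "sat V E r a (FNeg f) = (\<not> sat V E r a f)"
| "sat V E r a (FConj f g) = (sat V E r a f \<and> sat V E r a g)"
| "sat V E r a (FEx i f) = (\<exists>v\<in>V. sat V E r (a(i := v)) f)"

definition is_graph :: "'v set \<Rightarrow> ('v \<Rightarrow> 'v \<Rightarrow> bool) \<Rightarrow> bool" where
  "is_graph V E \<longleftrightarrow> (\<forall>x\<in>V. \<forall>y\<in>V. E x y \<longrightarrow> E y x) \<and> (\<forall>x\<in>V. \<not> E x x)"

text \<open>The definable set phi(G) for a formula whose free variables are among
  x_0,...,x_{p-1}; tuples in V^p are represented as extensional functions on {..<p}.\<close>
definition defset :: "'v set \<Rightarrow> ('v \<Rightarrow> 'v \<Rightarrow> bool) \<Rightarrow> 'v \<Rightarrow> nat \<Rightarrow> fform \<Rightarrow> (nat \<Rightarrow> 'v) set" where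
  "defset V E r p \<phi> = {a \<in> {..<p} \<rightarrow>\<^sub>E V. sat V E r a \<phi>}"

text \<open>Unary definable set phi(G) as a set of vertices (formula with one free variable x_0).\<close>
definition defset1 :: "'v set \<Rightarrow> ('v \<Rightarrow> 'v \<Rightarrow> bool) \<Rightarrow> 'v \<Rightarrow> fform \<Rightarrow> 'v set" where
  "defset1 V E r \<phi> = {v \<in> V. sat V E r (\<lambda>_. v) \<phi>}"

definition stone_fin :: "'v set \<Rightarrow> ('v \<Rightarrow> 'v \<Rightarrow> bool) \<Rightarrow> 'v \<Rightarrow> nat \<Rightarrow> fform \<Rightarrow> real" where
  "stone_fin V E r p \<phi> =
     (if p = 0 then (if sat V E r (\<lambda>_. undefined) \<phi> then 1 else 0)
      else real (card (defset V E r p \<phi>)) / real (card V) ^ p)"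

text \<open>Stone pairing with a (rooted) modeling whose vertex set carries the probability measure M.\<close>
definition stone_mod :: "'b measure \<Rightarrow> ('b \<Rightarrow> 'b \<Rightarrow> bool) \<Rightarrow> 'b \<Rightarrow> nat \<Rightarrow> fform \<Rightarrow> real" where
  "stone_mod M E r p \<phi> =
     (if p = 0 then (if sat (space M) E r (\<lambda>_. undefined) \<phi> then 1 else 0)
      else measure (PiM {..<p} (\<lambda>_. M)) (defset (space M) E r p \<phi>))"

definition standard_borel :: "'b measure \<Rightarrow> bool" where
  "standard_borel M \<longleftrightarrow> (\<exists>T :: 'b topology.
      topspace T = space M \<and> completely_metrizable_space T \<and> separable_space T \<and>
      sets M = sigma_sets (space M) {U. openin T U})"

definition modeling :: "'b measure \<Rightarrow> ('b \<Rightarrow> 'b \<Rightarrow> bool) \<Rightarrow> bool" where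
  "modeling M E \<longleftrightarrow> is_graph (space M) E \<and> prob_space M \<and> standard_borel M \<and>
     (\<forall>p \<phi>. graph_formula \<phi> \<and> fv \<phi> \<subseteq> {..<p} \<longrightarrow>
        defset (space M) E undefined p \<phi> \<in> sets (PiM {..<p} (\<lambda>_. M)))"

definition FO_convergent :: "(nat \<Rightarrow> 'v set) \<Rightarrow> (nat \<Rightarrow> 'v \<Rightarrow> 'v \<Rightarrow> bool) \<Rightarrow> bool" where
  "FO_convergent V E \<longleftrightarrow> (\<forall>p \<phi>. graph_formula \<phi> \<and> fv \<phi> \<subseteq> {..<p} \<longrightarrow>
      convergent (\<lambda>n. stone_fin (V n) (E n) undefined p \<phi>))"

definition modeling_limit :: "(nat \<Rightarrow> 'v set) \<Rightarrow> (nat \<Rightarrow> 'v \<Rightarrow> 'v \<Rightarrow> bool) \<Rightarrow>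
    'b measure \<Rightarrow> ('b \<Rightarrow> 'b \<Rightarrow> bool) \<Rightarrow> bool" where
  "modeling_limit V E M EL \<longleftrightarrow> modeling M EL \<and>
     (\<forall>p \<phi>. graph_formula \<phi> \<and> fv \<phi> \<subseteq> {..<p} \<longrightarrow>
        (\<lambda>n. stone_fin (V n) (E n) undefined p \<phi>) \<longlonglongrightarrow> stone_mod M EL undefined p \<phi>)"

end

theory Submission
  imports Defs
begin


fun trt :: "(nat \<Rightarrow> nat) \<Rightarrow> fterm \<Rightarrow> fterm \<Rightarrow> fterm" where
  "trt g R (Var i) = Var (g i)"
| "trt g R Root = R"

fun tr :: "(nat \<Rightarrow> nat) \<Rightarrow> fterm \<Rightarrow> fform \<Rightarrow> fform" where
  "tr g R (FEq s t) = FEq (trt g R s) (trt g R t)"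
| "tr g R (FAdj s t) = FAdj (trt g R s) (trt g R t)"
| "tr g R (FNeg f) = FNeg (tr g R f)"
| "tr g R (FConj f h) = FConj (tr g R f) (tr g R h)"
| "tr g R (FEx i f) = FEx (g i) (tr g R f)"

lemma teval_trt:
  assumes "\<And>z. R = Var z \<Longrightarrow> z \<notin> range g"
  shows "teval r a (trt g R s) = teval (teval r a R) (a \<circ> g) s"
  by (cases s) auto

lemma sat_tr:
  assumes "inj g" "\<And>z. R = Var z \<Longrightarrow> z \<notin> range g"
  shows "sat V E r a (tr g R \<phi>) = sat V E (teval r a R) (a \<circ> g) \<phi>"
  using assms(2)
proof (induction \<phi> arbitrary: a)
  case (FEx i f)
  have 1: "teval r (a(g i := v)) R = teval r a R" for v
    using FEx.prems by (cases R) auto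
  have 2: "(a(g i := v)) \<circ> g = (a \<circ> g)(i := v)" for v
    using assms(1) by (auto simp: fun_eq_iff inj_eq)
  show ?case by (simp only: tr.simps sat.simps FEx.IH[OF FEx.prems] 1 2)
qed (auto simp: teval_trt)

lemma fv_tr: "fv (tr g R \<phi>) \<subseteq> g ` fv \<phi> \<union> tfv R"
proof (induction \<phi>)
  case (FEq s t) then show ?case by (cases s; cases t) auto
next
  case (FAdj s t) then show ?case by (cases s; cases t) auto
qed auto

lemma graph_tr: "troot_free R \<or> graph_formula \<phi> \<Longrightarrow> graph_formula (tr g R \<phi>)"
proof (induction \<phi>)
  case (FEq s t) then show ?case by (cases s; cases t) auto
next
  case (FAdj s t) then show ?case by (cases s; cases t) auto
qed auto

lemma teval_fv: "(\<And>i. i \<in> tfv s \<Longrightarrow> a i = b i) \<Longrightarrow> teval r a s = teval r b s"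
  by (cases s) auto
lemma sat_fv: "(\<And>i. i \<in> fv \<phi> \<Longrightarrow> a i = b i) \<Longrightarrow> sat V E r a \<phi> = sat V E r b \<phi>"
proof (induction \<phi> arbitrary: a b)
  case (FEq s t)
  have "teval r a s = teval r b s" "teval r a t = teval r b t"
    by (rule teval_fv, rule FEq.prems, simp)+
  then show ?case by simp
next
  case (FAdj s t)
  have "teval r a s = teval r b s" "teval r a t = teval r b t"
    by (rule teval_fv, rule FAdj.prems, simp)+
  then show ?case by simp
next
  case (FNeg f) 
  have "sat V E r a f = sat V E r b f" by (rule FNeg.IH) (rule FNeg.prems, simp)
  then show ?case by simp
next
  case (FConj f h)
  have "sat V E r a f = sat V E r b f" by (rule FConj.IH(1)) (rule FConj.prems, simp)
  moreover have "sat V E r a h = sat V E r b h" by (rule FConj.IH(2)) (rule FConj.prems, simp)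
  ultimately show ?case by simp
next
  case (FEx i f)
  have "sat V E r (a(i := v)) f = sat V E r (b(i := v)) f" for v
    by (rule FEx.IH) (use FEx.prems in auto)
  then show ?case by simp
qed

lemma sat_root: "graph_formula \<phi> \<Longrightarrow> sat V E r a \<phi> = sat V E r' a \<phi>"
proof (induction \<phi> arbitrary: a)
  case (FEq s t) then show ?case by (cases s; cases t) auto
next
  case (FAdj s t) then show ?case by (cases s; cases t) auto
qed auto

definition TT :: fform where "TT = FNeg (FEx 0 (FNeg (FEq (Var 0) (Var 0))))"

lemma TT_simps[simp]: "sat V E r a TT" "fv TT = {}" "graph_formula TT"
  by (auto simp: TT_def)

definition bigconj :: "fform list \<Rightarrow> fform" where "bigconj fs = foldr FConj fs TT"

lemma sat_bigconj: "sat V E r a (bigconj fs) \<longleftrightarrow> (\<forall>f\<in>set fs. sat V E r a f)"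
  by (induction fs) (auto simp: bigconj_def)

lemma fv_bigconj: "fv (bigconj fs) = (\<Union>f\<in>set fs. fv f)"
  by (induction fs) (auto simp: bigconj_def)

lemma graph_bigconj: "graph_formula (bigconj fs) \<longleftrightarrow> (\<forall>f\<in>set fs. graph_formula f)"
  by (induction fs) (auto simp: bigconj_def)

definition exs :: "nat list \<Rightarrow> fform \<Rightarrow> fform" where "exs zs f = foldr FEx zs f"

lemma fv_exs: "fv (exs zs f) = fv f - set zs"
  by (induction zs) (auto simp: exs_def)

lemma graph_exs: "graph_formula (exs zs f) = graph_formula f"
  by (induction zs) (auto simp: exs_def)

lemma sat_exs: "sat V E r a (exs zs f) \<longleftrightarrow>
  (\<exists>w. (\<forall>z\<in>set zs. w z \<in> V) \<and> sat V E r (\<lambda>i. if i \<in> set zs then w i else a i) f)"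
proof (induction zs arbitrary: a)
  case Nil then show ?case by (simp add: exs_def)
next
  case (Cons z zs)
  have "sat V E r a (exs (z # zs) f) \<longleftrightarrow> (\<exists>v\<in>V. sat V E r (a(z := v)) (exs zs f))"
    by (simp add: exs_def)
  also have "\<dots> \<longleftrightarrow> (\<exists>w. (\<forall>z\<in>set (z#zs). w z \<in> V) \<and> sat V E r (\<lambda>i. if i \<in> set (z#zs) then w i else a i) f)"
  proof
    assume "\<exists>v\<in>V. sat V E r (a(z := v)) (exs zs f)"
    then obtain v where v: "v \<in> V" "sat V E r (a(z := v)) (exs zs f)" by blast
    then obtain w where w: "\<forall>z\<in>set zs. w z \<in> V"
      "sat V E r (\<lambda>i. if i \<in> set zs then w i else (a(z := v)) i) f"
      unfolding Cons.IH by blast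
    define w' where "w' = (\<lambda>i. if i \<in> set zs then w i else v)"
    have eq: "(\<lambda>i. if i \<in> set zs then w i else (a(z := v)) i) = (\<lambda>i. if i \<in> set (z#zs) then w' i else a i)"
    proof
      fix i show "(if i \<in> set zs then w i else (a(z := v)) i) = (if i \<in> set (z#zs) then w' i else a i)"
        by (cases "i \<in> set zs"; cases "i = z") (simp_all add: w'_def)
    qed
    have "\<forall>z\<in>set (z#zs). w' z \<in> V" using v(1) w(1) by (simp add: w'_def)
    moreover have "sat V E r (\<lambda>i. if i \<in> set (z#zs) then w' i else a i) f"
      using w(2) unfolding eq by assumption
    ultimately show "\<exists>w. (\<forall>z\<in>set (z#zs). w z \<in> V) \<and> sat V E r (\<lambda>i. if i \<in> set (z#zs) then w i else a i) f"
      by blast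
  next
    assume "\<exists>w. (\<forall>z\<in>set (z#zs). w z \<in> V) \<and> sat V E r (\<lambda>i. if i \<in> set (z#zs) then w i else a i) f"
    then obtain w where w: "\<forall>z\<in>set (z#zs). w z \<in> V" "sat V E r (\<lambda>i. if i \<in> set (z#zs) then w i else a i) f"
      by blast
    have eq: "(\<lambda>i. if i \<in> set (z#zs) then w i else a i) = (\<lambda>i. if i \<in> set zs then w i else (a(z := w z)) i)"
    proof
      fix i show "(if i \<in> set (z#zs) then w i else a i) = (if i \<in> set zs then w i else (a(z := w z)) i)"
        by (cases "i \<in> set zs"; cases "i = z") simp_all
    qed
    have w1: "\<forall>z\<in>set zs. w z \<in> V" using w(1) by simp
    have "sat V E r (a(z := w z)) (exs zs f)"
      unfolding Cons.IH using w1 w(2)[unfolded eq] by blast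
    moreover have "w z \<in> V" using w by simp
    ultimately show "\<exists>v\<in>V. sat V E r (a(z := v)) (exs zs f)" by blast
  qed
  finally show ?case .
qed



definition gI :: "nat \<Rightarrow> nat \<Rightarrow> nat \<Rightarrow> nat \<Rightarrow> nat" where
  "gI p B i = (\<lambda>l. if l < p then i*p + l else B + l)"
definition hT :: "nat \<Rightarrow> nat \<Rightarrow> nat \<Rightarrow> nat" where
  "hT B y = (\<lambda>l. if l = 0 then y else B + l)"

definition blk :: "nat \<Rightarrow> nat \<Rightarrow> (nat \<Rightarrow> 'a) \<Rightarrow> nat \<Rightarrow> 'a" where
  "blk p i a = (\<lambda>l\<in>{..<p}. a (i*p + l))"

definition dist_f :: "nat \<Rightarrow> nat \<Rightarrow> fform" where
  "dist_f Q j = bigconj (map (\<lambda>(s,t). FNeg (FEq (Var (Q+s)) (Var (Q+t))))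
      (filter (\<lambda>(s,t). s \<noteq> t) (List.product [0..<j] [0..<j])))"

definition psi_f :: "nat \<Rightarrow> nat \<Rightarrow> nat \<Rightarrow> nat \<Rightarrow> fform \<Rightarrow> fform \<Rightarrow> nat \<Rightarrow> fform" where
  "psi_f p m Q B \<phi> \<xi> t = FConj (tr (hT B (Q+t)) Root \<xi>)
      (bigconj (map (\<lambda>i. tr (gI p B i) (Var (Q+t)) \<phi>) [0..<m]))"

definition theta :: "nat \<Rightarrow> nat \<Rightarrow> nat \<Rightarrow> fform \<Rightarrow> fform \<Rightarrow> fform" where
  "theta p m j \<phi> \<xi> = exs [m*p..<m*p+j] (FConj (dist_f (m*p) j)
      (bigconj (map (psi_f p m (m*p) (m*p+j) \<phi> \<xi>) [0..<j])))"

lemma lt_mult_aux: "i < (m::nat) \<Longrightarrow> l < p \<Longrightarrow> i*p + l < m*p"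
proof -
  assume "i < m" "l < p"
  then have "Suc i * p \<le> m * p" by (intro mult_le_mono1) simp
  then show ?thesis using \<open>l < p\<close> by simp
qed

lemma inj_gI: assumes "m*p \<le> B" "i < m" shows "inj (gI p B i)"
proof (rule injI)
  fix x y assume "gI p B i x = gI p B i y"
  then show "x = y" using lt_mult_aux[OF assms(2), of x p] lt_mult_aux[OF assms(2), of y p] assms(1)
    by (auto simp: gI_def split: if_splits)
qed

lemma range_gI: assumes "m*p \<le> Q" "Q \<le> z" "z < B" "i < m" shows "z \<notin> range (gI p B i)"
proof
  assume "z \<in> range (gI p B i)"
  then obtain l where "z = gI p B i l" by auto
  then show False using lt_mult_aux[OF assms(4), of l p] assms by (auto simp: gI_def split: if_splits)
qed

lemma inj_hT: assumes "y < B" shows "inj (hT B y)"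
proof (rule injI)
  fix x x' assume "hT B y x = hT B y x'"
  then show "x = x'" using assms by (auto simp: hT_def split: if_splits)
qed

lemma graph_theta: "graph_formula \<xi> \<Longrightarrow> graph_formula (theta p m j \<phi> \<xi>)"
  by (auto simp: theta_def graph_exs graph_bigconj dist_f_def psi_f_def intro!: graph_tr)

lemma fv_theta: assumes "fv \<xi> \<subseteq> {0}" "fv \<phi> \<subseteq> {..<p}"
  shows "fv (theta p m j \<phi> \<xi>) \<subseteq> {..<m*p}"
proof -
  let ?Q = "m*p" and ?B = "m*p+j"
  have d: "fv (dist_f ?Q j) \<subseteq> {?Q..<?Q+j}"
    by (auto simp: dist_f_def fv_bigconj)
  have p: "fv (psi_f p m ?Q ?B \<phi> \<xi> t) \<subseteq> {..<?Q} \<union> {?Q..<?Q+j}" if "t < j" for t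
  proof -
    have "fv (tr (hT ?B (?Q+t)) Root \<xi>) \<subseteq> hT ?B (?Q+t) ` fv \<xi> \<union> tfv Root" by (rule fv_tr)
    also have "\<dots> \<subseteq> {?Q+t}" using assms(1) by (auto simp: hT_def)
    finally have 1: "fv (tr (hT ?B (?Q+t)) Root \<xi>) \<subseteq> {..<?Q} \<union> {?Q..<?Q+j}" using that by auto
    have 2: "fv (tr (gI p ?B i) (Var (?Q+t)) \<phi>) \<subseteq> {..<?Q} \<union> {?Q..<?Q+j}" if "i < m" for i
    proof -
      have "fv (tr (gI p ?B i) (Var (?Q+t)) \<phi>) \<subseteq> gI p ?B i ` fv \<phi> \<union> tfv (Var (?Q+t))" by (rule fv_tr)
      also have "\<dots> \<subseteq> {..<?Q} \<union> {?Q..<?Q+j}"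
        using assms(2) lt_mult_aux[OF that, of _ p] \<open>t < j\<close> by (auto simp: gI_def)
      finally show ?thesis .
    qed
    have "fv (psi_f p m ?Q ?B \<phi> \<xi> t) = fv (tr (hT ?B (?Q+t)) Root \<xi>) \<union> (\<Union>i\<in>{..<m}. fv (tr (gI p ?B i) (Var (?Q+t)) \<phi>))"
      by (auto simp: psi_f_def fv_bigconj)
    then show ?thesis using 1 2 by auto
  qed
  have "fv (theta p m j \<phi> \<xi>) = (fv (dist_f ?Q j) \<union> (\<Union>t\<in>{..<j}. fv (psi_f p m ?Q ?B \<phi> \<xi> t))) - {?Q..<?Q+j}"
    by (auto simp: theta_def fv_exs fv_bigconj)
  also have "\<dots> \<subseteq> {..<?Q}" using d p by blast
  finally show ?thesis .
qed



lemma inj_card_iff: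
  assumes "finite S"
  shows "(\<exists>f. inj_on f {..<j} \<and> f ` {..<j} \<subseteq> S) \<longleftrightarrow> j \<le> card S"
proof
  assume "\<exists>f. inj_on f {..<j} \<and> f ` {..<j} \<subseteq> S"
  then obtain f where "inj_on f {..<j}" "f ` {..<j} \<subseteq> S" by blast
  then show "j \<le> card S" using card_inj_on_le[of f "{..<j}" S] assms by auto
next
  assume "j \<le> card S"
  then obtain T where T: "T \<subseteq> S" "card T = j" using obtain_subset_with_card_n by metis
  have "finite T" using T assms finite_subset by blast
  then obtain h where "bij_betw h {0..<card T} T" using ex_bij_betw_nat_finite by blast
  then have "inj_on h {..<j} \<and> h ` {..<j} \<subseteq> S" using T
    by (auto simp: bij_betw_def lessThan_atLeast0)
  then show "\<exists>f. inj_on f {..<j} \<and> f ` {..<j} \<subseteq> S" by blast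
qed

lemma sat_theta:
  assumes xi: "graph_formula \<xi>" "fv \<xi> \<subseteq> {0}" and phi: "fv \<phi> \<subseteq> {..<p}"
    and fin: "finite (defset1 V E undefined \<xi>)"
  shows "sat V E r a (theta p m j \<phi> \<xi>) \<longleftrightarrow>
    j \<le> card {y \<in> defset1 V E undefined \<xi>. \<forall>i<m. sat V E y (blk p i a) \<phi>}"
proof -
  define Q where "Q = m*p"
  define B where "B = Q + j"
  define S where "S = {y \<in> defset1 V E undefined \<xi>. \<forall>i<m. sat V E y (blk p i a) \<phi>}"
  define a' where "a' = (\<lambda>w i. if i \<in> set [Q..<Q+j] then w i else a i)"
  have a'Q: "a' w (Q+t) = w (Q+t)" if "t < j" for w t using that by (simp add: a'_def)
  have L1: "sat V E r (a' w) (tr (hT B (Q+t)) Root \<xi>) \<longleftrightarrow> sat V E undefined (\<lambda>_. w (Q+t)) \<xi>"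
    if "t < j" for w t
  proof -
    have "sat V E r (a' w) (tr (hT B (Q+t)) Root \<xi>) = sat V E r (a' w \<circ> hT B (Q+t)) \<xi>"
      using sat_tr[OF inj_hT, of "Q+t" B Root] that by (simp add: B_def)
    also have "\<dots> = sat V E undefined (a' w \<circ> hT B (Q+t)) \<xi>" by (rule sat_root[OF xi(1)])
    also have "\<dots> = sat V E undefined (\<lambda>_. w (Q+t)) \<xi>"
      by (rule sat_fv) (use xi(2) a'Q[OF that] in \<open>auto simp: hT_def\<close>)
    finally show ?thesis .
  qed
  have L2: "sat V E r (a' w) (tr (gI p B i) (Var (Q+t)) \<phi>) \<longleftrightarrow> sat V E (w (Q+t)) (blk p i a) \<phi>"
    if "t < j" "i < m" for w t i
  proof -
    have "sat V E r (a' w) (tr (gI p B i) (Var (Q+t)) \<phi>) = sat V E (a' w (Q+t)) (a' w \<circ> gI p B i) \<phi>"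
      using sat_tr[OF inj_gI[of m p B i], of "Var (Q+t)" V E r "a' w" \<phi>]
        range_gI[of m p Q "Q+t" B i] that by (simp add: B_def Q_def)
    also have "\<dots> = sat V E (w (Q+t)) (a' w \<circ> gI p B i) \<phi>" using a'Q[OF that(1)] by simp
    also have "\<dots> = sat V E (w (Q+t)) (blk p i a) \<phi>"
    proof (rule sat_fv)
      fix l assume "l \<in> fv \<phi>"
      then have l: "l < p" using phi by auto
      then have "i*p + l < Q" using lt_mult_aux[OF that(2) l] by (simp add: Q_def)
      then show "(a' w \<circ> gI p B i) l = blk p i a l" using l by (simp add: a'_def gI_def blk_def)
    qed
    finally show ?thesis .
  qed
  have LD: "sat V E r (a' w) (dist_f Q j) \<longleftrightarrow> inj_on (\<lambda>t. w (Q+t)) {..<j}" for w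
  proof -
    have "sat V E r (a' w) (dist_f Q j) \<longleftrightarrow> (\<forall>s<j. \<forall>t<j. s \<noteq> t \<longrightarrow> a' w (Q+s) \<noteq> a' w (Q+t))"
      by (auto simp: dist_f_def sat_bigconj)
    also have "\<dots> \<longleftrightarrow> (\<forall>s<j. \<forall>t<j. s \<noteq> t \<longrightarrow> w (Q+s) \<noteq> w (Q+t))" using a'Q by auto
    also have "\<dots> \<longleftrightarrow> inj_on (\<lambda>t. w (Q+t)) {..<j}" unfolding inj_on_def by auto
    finally show ?thesis .
  qed
  have LP: "sat V E r (a' w) (bigconj (map (psi_f p m Q B \<phi> \<xi>) [0..<j])) \<longleftrightarrow>
     (\<forall>t<j. sat V E undefined (\<lambda>_. w (Q+t)) \<xi> \<and> (\<forall>i<m. sat V E (w (Q+t)) (blk p i a) \<phi>))" for w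
    using L1 L2 by (auto simp: sat_bigconj psi_f_def)
  have "sat V E r a (theta p m j \<phi> \<xi>) \<longleftrightarrow>
     (\<exists>w. (\<forall>z\<in>set [Q..<Q+j]. w z \<in> V) \<and> inj_on (\<lambda>t. w (Q+t)) {..<j} \<and>
        (\<forall>t<j. sat V E undefined (\<lambda>_. w (Q+t)) \<xi> \<and> (\<forall>i<m. sat V E (w (Q+t)) (blk p i a) \<phi>)))"
    unfolding theta_def sat_exs using LD LP by (simp add: a'_def Q_def B_def)
  also have "\<dots> \<longleftrightarrow> (\<exists>f. inj_on f {..<j} \<and> f ` {..<j} \<subseteq> S)"
  proof
    assume "\<exists>w. (\<forall>z\<in>set [Q..<Q+j]. w z \<in> V) \<and> inj_on (\<lambda>t. w (Q+t)) {..<j} \<and>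
        (\<forall>t<j. sat V E undefined (\<lambda>_. w (Q+t)) \<xi> \<and> (\<forall>i<m. sat V E (w (Q+t)) (blk p i a) \<phi>))"
    then obtain w where w: "\<forall>z\<in>set [Q..<Q+j]. w z \<in> V" "inj_on (\<lambda>t. w (Q+t)) {..<j}"
        "\<forall>t<j. sat V E undefined (\<lambda>_. w (Q+t)) \<xi> \<and> (\<forall>i<m. sat V E (w (Q+t)) (blk p i a) \<phi>)"
      by blast
    have "(\<lambda>t. w (Q+t)) ` {..<j} \<subseteq> S" using w(1,3) by (auto simp: S_def defset1_def)
    then show "\<exists>f. inj_on f {..<j} \<and> f ` {..<j} \<subseteq> S" using w(2) by blast
  next
    assume "\<exists>f. inj_on f {..<j} \<and> f ` {..<j} \<subseteq> S"
    then obtain f where f: "inj_on f {..<j}" "f ` {..<j} \<subseteq> S" by blast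
    define w where "w = (\<lambda>z. f (z - Q))"
    have wf: "(\<lambda>t. w (Q+t)) = f" by (simp add: w_def)
    have "\<forall>z\<in>set [Q..<Q+j]. w z \<in> V"
    proof
      fix z assume "z \<in> set [Q..<Q+j]"
      then have "z - Q < j" by auto
      then have "f (z - Q) \<in> S" using f(2) by auto
      then show "w z \<in> V" by (simp add: w_def S_def defset1_def)
    qed
    moreover have "\<forall>t<j. sat V E undefined (\<lambda>_. w (Q+t)) \<xi> \<and> (\<forall>i<m. sat V E (w (Q+t)) (blk p i a) \<phi>)"
      using f(2) by (auto simp: wf[unfolded fun_eq_iff, rule_format] S_def defset1_def)
    ultimately show "\<exists>w. (\<forall>z\<in>set [Q..<Q+j]. w z \<in> V) \<and> inj_on (\<lambda>t. w (Q+t)) {..<j} \<and>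
        (\<forall>t<j. sat V E undefined (\<lambda>_. w (Q+t)) \<xi> \<and> (\<forall>i<m. sat V E (w (Q+t)) (blk p i a) \<phi>))"
      using f(1) wf by auto
  qed
  also have "\<dots> \<longleftrightarrow> j \<le> card S"
    by (rule inj_card_iff) (use fin in \<open>simp add: S_def\<close>)
  finally show ?thesis by (simp add: S_def)
qed



lemma coord_indep:
  assumes N: "prob_space N" and fin: "finite I"
  shows "prob_space.indep_vars (PiM I (\<lambda>_. N)) (\<lambda>_. N) (\<lambda>i \<omega>. \<omega> i) I"
proof -
  interpret P: prob_space "PiM I (\<lambda>_. N)" by (intro prob_space_PiM N)
  show ?thesis
  proof (cases "I = {}")
    case True
    show ?thesis unfolding P.indep_vars_def
      by (intro conjI ballI P.indep_setsI) (use True in auto)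
  next
    case False
    have rv: "(\<lambda>\<omega>. \<omega> i) \<in> measurable (PiM I (\<lambda>_. N)) N" if "i \<in> I" for i
      using that by (rule measurable_component_singleton)
    have "distr (PiM I (\<lambda>_. N)) (PiM I (\<lambda>_. N)) (\<lambda>x. \<lambda>i\<in>I. x i) = distr (PiM I (\<lambda>_. N)) (PiM I (\<lambda>_. N)) (\<lambda>x. x)"
      by (rule distr_cong) (auto simp: space_PiM)
    also have "\<dots> = PiM I (\<lambda>_. N)" by simp
    also have "\<dots> = PiM I (\<lambda>i. distr (PiM I (\<lambda>_. N)) N (\<lambda>\<omega>. \<omega> i))"
    proof (rule PiM_cong)
      fix x assume "x \<in> I"
      then show "N = distr (PiM I (\<lambda>_. N)) N (\<lambda>\<omega>. \<omega> x)"
        using distr_PiM_component[of I "\<lambda>_. N" x] N by simp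
    qed simp
    finally show ?thesis
      by (subst P.indep_vars_iff_distr_eq_PiM'[OF False]) (auto intro: rv)
  qed
qed

lemma blk_measurable:
  assumes "i < m"
  shows "blk p i \<in> measurable (PiM {..<m*p} (\<lambda>_. N)) (PiM {..<p} (\<lambda>_. N))"
  unfolding blk_def
  by (intro measurable_restrict measurable_component_singleton) (use lt_mult_aux[OF assms] in auto)

lemma blk_prob:
  assumes N: "prob_space N" and "i < m" and A: "A \<in> sets (PiM {..<p} (\<lambda>_. N))"
  shows "measure (PiM {..<m*p} (\<lambda>_. N)) (blk p i -` A \<inter> space (PiM {..<m*p} (\<lambda>_. N)))
       = measure (PiM {..<p} (\<lambda>_. N)) A"
proof -
  have d: "distr (PiM {..<m*p} (\<lambda>_. N)) (PiM {..<p} (\<lambda>_. N)) (\<lambda>\<omega>. \<lambda>n\<in>{..<p}. \<omega> (i*p + n))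
      = PiM {..<p} (\<lambda>_. N)"
    using distr_PiM_reindex[of "{..<m*p}" "\<lambda>_. N" "\<lambda>n. i*p + n" "{..<p}"] N lt_mult_aux[OF assms(2)]
    by (auto simp: inj_on_def)
  have e: "blk p i = (\<lambda>\<omega>. \<lambda>n\<in>{..<p}. \<omega> (i*p + n))"
    by (simp add: fun_eq_iff blk_def)
  have "distr (PiM {..<m*p} (\<lambda>_. N)) (PiM {..<p} (\<lambda>_. N)) (blk p i) = PiM {..<p} (\<lambda>_. N)"
    unfolding e by (rule d)
  then show ?thesis
    using measure_distr[OF blk_measurable[OF assms(2)] A] by simp
qed

lemma blk_indep:
  fixes N :: "'a measure"
  assumes N: "prob_space N"
  shows "prob_space.indep_vars (PiM {..<m*p} (\<lambda>_. N)) (\<lambda>_. PiM {..<p} (\<lambda>_. N)) (\<lambda>i. blk p i) {..<m}"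
proof -
  interpret P: prob_space "PiM {..<m*p} (\<lambda>_. N)" by (intro prob_space_PiM N)
  define K where "K = (\<lambda>i. {i*p..<i*p+p})"
  have K: "K i \<subseteq> {..<m*p}" if "i \<in> {..<m}" for i
  proof
    fix x assume "x \<in> K i"
    then obtain l where "l < p" "x = i*p + l" unfolding K_def
      by (metis add_diff_inverse_nat add_less_cancel_left atLeastLessThan_iff not_less)
    then show "x \<in> {..<m*p}" using lt_mult_aux[of i m l p] that by auto
  qed
  have disj: "disjoint_family_on K {..<m}"
    unfolding disjoint_family_on_def
  proof (intro ballI impI)
    fix i j assume "i \<in> {..<m}" "j \<in> {..<m}" "i \<noteq> j"
    show "K i \<inter> K j = {}"
    proof (cases "i < j")
      case True
      then have "Suc i * p \<le> j * p" by (intro mult_le_mono1) simp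
      then show ?thesis by (auto simp: K_def)
    next
      case False
      then have "Suc j * p \<le> i * p" using \<open>i \<noteq> j\<close> by (intro mult_le_mono1) simp
      then show ?thesis by (auto simp: K_def)
    qed
  qed
  have ind: "P.indep_vars (\<lambda>i. PiM (K i) (\<lambda>_. N)) (\<lambda>i \<omega>. restrict (\<lambda>l. \<omega> l) (K i)) {..<m}"
    using P.indep_vars_restrict[OF coord_indep[OF N, of "{..<m*p}", simplified] K disj] by simp
  define Y where "Y = (\<lambda>i (x::nat \<Rightarrow> 'a). \<lambda>l\<in>{..<p}. x (i*p + l))"
  have Y: "Y i \<in> measurable (PiM (K i) (\<lambda>_. N)) (PiM {..<p} (\<lambda>_. N))" for i
    unfolding Y_def
    by (intro measurable_restrict measurable_component_singleton) (auto simp: K_def)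
  have ind2: "P.indep_vars (\<lambda>_. PiM {..<p} (\<lambda>_. N)) (\<lambda>i \<omega>. Y i (restrict (\<lambda>l. \<omega> l) (K i))) {..<m}"
    by (rule P.indep_vars_compose2[OF ind Y])
  have eq: "(\<lambda>\<omega>. Y i (restrict (\<lambda>l. \<omega> l) (K i))) = blk p i" for i
    by (auto simp: fun_eq_iff Y_def blk_def K_def)
  show ?thesis using ind2 unfolding eq .
qed

lemma blocks_prob:
  assumes N: "prob_space N" and m: "m \<ge> 1" and A: "A \<in> sets (PiM {..<p} (\<lambda>_. N))"
  shows "(\<Inter>i\<in>{..<m}. blk p i -` A \<inter> space (PiM {..<m*p} (\<lambda>_. N))) \<in> sets (PiM {..<m*p} (\<lambda>_. N))"
    "measure (PiM {..<m*p} (\<lambda>_. N)) (\<Inter>i\<in>{..<m}. blk p i -` A \<inter> space (PiM {..<m*p} (\<lambda>_. N)))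
       = measure (PiM {..<p} (\<lambda>_. N)) A ^ m"
proof -
  interpret P: prob_space "PiM {..<m*p} (\<lambda>_. N)" by (intro prob_space_PiM N)
  have "0 \<in> {..<m}" using m by simp
  then have ne: "{..<m} \<noteq> {}" by blast
  show "(\<Inter>i\<in>{..<m}. blk p i -` A \<inter> space (PiM {..<m*p} (\<lambda>_. N))) \<in> sets (PiM {..<m*p} (\<lambda>_. N))"
    using ne by (intro sets.finite_INT) (auto intro!: measurable_sets[OF blk_measurable A])
  have "measure (PiM {..<m*p} (\<lambda>_. N)) (\<Inter>i\<in>{..<m}. blk p i -` A \<inter> space (PiM {..<m*p} (\<lambda>_. N)))
      = (\<Prod>i\<in>{..<m}. measure (PiM {..<m*p} (\<lambda>_. N)) (blk p i -` A \<inter> space (PiM {..<m*p} (\<lambda>_. N))))"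
    by (rule P.indep_varsD[OF blk_indep[OF N] ne]) (use A in auto)
  also have "\<dots> = (\<Prod>i\<in>{..<m}. measure (PiM {..<p} (\<lambda>_. N)) A)"
    by (rule prod.cong) (auto simp: blk_prob[OF N _ A])
  finally show "measure (PiM {..<m*p} (\<lambda>_. N)) (\<Inter>i\<in>{..<m}. blk p i -` A \<inter> space (PiM {..<m*p} (\<lambda>_. N)))
       = measure (PiM {..<p} (\<lambda>_. N)) A ^ m" by simp
qed



lemma sum_if_card: "finite A \<Longrightarrow> (\<Sum>x\<in>A. if P x then 1 else 0 :: real) = real (card {x\<in>A. P x})"
  by (simp add: sum.If_cases Int_def conj_commute)

lemma rooted_defset_meas:
  fixes N :: "'b measure"
  assumes meas: "\<And>q \<psi>. graph_formula \<psi> \<Longrightarrow> fv \<psi> \<subseteq> {..<q} \<Longrightarrow>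
      defset (space N) E undefined q \<psi> \<in> sets (PiM {..<q} (\<lambda>_. N))"
    and phi: "fv \<phi> \<subseteq> {..<p}" and y: "y \<in> space N"
  shows "defset (space N) E y p \<phi> \<in> sets (PiM {..<p} (\<lambda>_. N))"
proof -
  define g0 where "g0 = (\<lambda>l. if l < p then l else Suc p + l)"
  have inj: "inj g0" by (rule injI) (auto simp: g0_def split: if_splits)
  have rng: "p \<notin> range g0" by (auto simp: g0_def)
  define \<psi> where "\<psi> = tr g0 (Var p) \<phi>"
  have g: "graph_formula \<psi>" unfolding \<psi>_def by (rule graph_tr) simp
  have "fv \<psi> \<subseteq> g0 ` fv \<phi> \<union> tfv (Var p)" unfolding \<psi>_def by (rule fv_tr)
  also have "\<dots> \<subseteq> {..<Suc p}" using phi by (auto simp: g0_def)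
  finally have D: "defset (space N) E undefined (Suc p) \<psi> \<in> sets (PiM {..<Suc p} (\<lambda>_. N))"
    using meas[OF g] by blast
  define F where "F = (\<lambda>x. \<lambda>i\<in>{..<Suc p}. if i = p then y else x i)"
  have Fm: "F \<in> measurable (PiM {..<p} (\<lambda>_. N)) (PiM {..<Suc p} (\<lambda>_. N))"
    unfolding F_def
  proof (intro measurable_restrict)
    fix i assume "i \<in> {..<Suc p}"
    then show "(\<lambda>x. if i = p then y else x i) \<in> measurable (PiM {..<p} (\<lambda>_. N)) N"
      using y by (cases "i = p") (auto intro: measurable_component_singleton)
  qed
  have key: "sat (space N) E undefined (F x) \<psi> \<longleftrightarrow> sat (space N) E y x \<phi>" for x
  proof -
    have "sat (space N) E undefined (F x) \<psi> = sat (space N) E (F x p) (F x \<circ> g0) \<phi>"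
      unfolding \<psi>_def using sat_tr[OF inj, of "Var p"] rng by simp
    also have "\<dots> = sat (space N) E y x \<phi>"
    proof -
      have "F x p = y" by (simp add: F_def)
      moreover have "sat (space N) E y (F x \<circ> g0) \<phi> = sat (space N) E y x \<phi>"
        by (rule sat_fv) (use phi in \<open>auto simp: F_def g0_def\<close>)
      ultimately show ?thesis by simp
    qed
    finally show ?thesis .
  qed
  have Fsp: "F x \<in> ({..<Suc p} \<rightarrow>\<^sub>E space N)" if "x \<in> ({..<p} \<rightarrow>\<^sub>E space N)" for x
    using that y by (auto simp: F_def PiE_def Pi_def)
  have "defset (space N) E y p \<phi> = F -` defset (space N) E undefined (Suc p) \<psi> \<inter> space (PiM {..<p} (\<lambda>_. N))"
    using Fsp key by (auto simp: defset_def space_PiM)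
  also have "\<dots> \<in> sets (PiM {..<p} (\<lambda>_. N))" by (rule measurable_sets[OF Fm D])
  finally show ?thesis .
qed



lemma power_sum_eq:
  fixes N :: "'b measure"
  assumes N: "prob_space N"
    and meas: "\<And>q \<psi>. graph_formula \<psi> \<Longrightarrow> fv \<psi> \<subseteq> {..<q} \<Longrightarrow>
      defset (space N) E undefined q \<psi> \<in> sets (PiM {..<q} (\<lambda>_. N))"
    and xi: "graph_formula \<xi>" "fv \<xi> \<subseteq> {0}" and fin: "finite (defset1 (space N) E undefined \<xi>)"
    and phi: "fv \<phi> \<subseteq> {..<p}" and m: "m \<ge> 1"
  shows "(\<Sum>y\<in>defset1 (space N) E undefined \<xi>. measure (PiM {..<p} (\<lambda>_. N)) (defset (space N) E y p \<phi>) ^ m)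
    = (\<Sum>j\<in>{1..card (defset1 (space N) E undefined \<xi>)}.
         measure (PiM {..<m*p} (\<lambda>_. N)) (defset (space N) E undefined (m*p) (theta p m j \<phi> \<xi>)))"
proof -
  define V where "V = space N"
  define X where "X = defset1 (space N) E undefined \<xi>"
  define P where "P = PiM {..<m*p} (\<lambda>_. N)"
  define Pp where "Pp = PiM {..<p} (\<lambda>_. N)"
  interpret P: prob_space P unfolding P_def by (intro prob_space_PiM N)
  define A where "A = (\<lambda>y. defset V E y p \<phi>)"
  define B where "B = (\<lambda>y. \<Inter>i\<in>{..<m}. blk p i -` A y \<inter> space P)"
  define T where "T = (\<lambda>j. defset V E undefined (m*p) (theta p m j \<phi> \<xi>))"
  define c where "c = (\<lambda>a. card {y \<in> X. \<forall>i<m. sat V E y (blk p i a) \<phi>})"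
  define k where "k = card X"
  have XV: "X \<subseteq> V" by (auto simp: X_def V_def defset1_def)
  have finX: "finite X" using fin by (simp add: X_def)
  have A_meas: "A y \<in> sets Pp" if "y \<in> X" for y
    unfolding A_def Pp_def V_def using rooted_defset_meas[OF meas phi] that XV by (auto simp: V_def)
  have B_meas: "B y \<in> sets P" and B_mu: "measure P (B y) = measure Pp (A y) ^ m" if "y \<in> X" for y
    using blocks_prob[OF N m A_meas[OF that, unfolded Pp_def]] by (simp_all add: B_def P_def Pp_def)
  have T_meas: "T j \<in> sets P" for j
    unfolding T_def P_def V_def
    by (rule meas[OF graph_theta[OF xi(1)] fv_theta[OF xi(2) phi]])
  have spP: "space P = {..<m*p} \<rightarrow>\<^sub>E V" by (simp add: P_def V_def space_PiM)
  have spPp: "space Pp = {..<p} \<rightarrow>\<^sub>E V" by (simp add: Pp_def V_def space_PiM)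
  have blk_sp: "blk p i a \<in> space Pp" if "a \<in> space P" "i < m" for a i
  proof -
    have "blk p i \<in> measurable P Pp" unfolding P_def Pp_def by (rule blk_measurable[OF that(2)])
    then show ?thesis using that(1) by (rule measurable_space)
  qed
  have memT: "a \<in> T j \<longleftrightarrow> j \<le> c a" if "a \<in> space P" for a j
    using that sat_theta[OF xi phi fin, of undefined a m j]
    by (simp add: T_def defset_def spP c_def X_def V_def)
  have memB: "a \<in> B y \<longleftrightarrow> (\<forall>i<m. sat V E y (blk p i a) \<phi>)" if "a \<in> space P" for a y
    using that blk_sp[OF that] spPp by (auto simp: B_def A_def defset_def)
  have cle: "c a \<le> k" for a
    unfolding c_def k_def by (rule card_mono[OF finX]) auto
  have pw: "(\<Sum>j\<in>{1..k}. indicator (T j) a) = (\<Sum>y\<in>X. indicator (B y) a :: real)" if "a \<in> space P" for a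
  proof -
    have "(\<Sum>j\<in>{1..k}. indicator (T j) a) = (\<Sum>j\<in>{1..k}. if j \<le> c a then 1 else 0 :: real)"
      by (rule sum.cong) (auto simp: indicator_def memT[OF that])
    also have "\<dots> = real (card {j\<in>{1..k}. j \<le> c a})" by (rule sum_if_card) simp
    also have "{j\<in>{1..k}. j \<le> c a} = {1..c a}" using cle[of a] by auto
    finally have 1: "(\<Sum>j\<in>{1..k}. indicator (T j) a) = real (c a)" by simp
    have "(\<Sum>y\<in>X. indicator (B y) a :: real) = (\<Sum>y\<in>X. if \<forall>i<m. sat V E y (blk p i a) \<phi> then 1 else 0)"
      by (rule sum.cong) (auto simp: indicator_def memB[OF that])
    also have "\<dots> = real (c a)" unfolding c_def by (rule sum_if_card[OF finX])
    finally show ?thesis using 1 by simp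
  qed
  have intT: "integrable P (indicator (T j) :: _ \<Rightarrow> real)" for j
    using T_meas[of j] by (intro integrable_real_indicator) (auto simp: less_top[symmetric])
  have intB: "integrable P (indicator (B y) :: _ \<Rightarrow> real)" if "y \<in> X" for y
    using B_meas[OF that] by (intro integrable_real_indicator) (auto simp: less_top[symmetric])
  have "(\<Sum>j\<in>{1..k}. measure P (T j)) = (\<Sum>j\<in>{1..k}. integral\<^sup>L P (indicator (T j)))"
    by (rule sum.cong) (auto simp: Int_absorb2[OF sets.sets_into_space[OF T_meas]])
  also have "\<dots> = integral\<^sup>L P (\<lambda>a. \<Sum>j\<in>{1..k}. indicator (T j) a)"
    using Bochner_Integration.integral_sum[where I="{1..k}" and M=P and f="\<lambda>j. indicator (T j)"] intT by simp
  also have "\<dots> = integral\<^sup>L P (\<lambda>a. \<Sum>y\<in>X. indicator (B y) a)"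
    by (rule Bochner_Integration.integral_cong) (simp_all only: pw)
  also have "\<dots> = (\<Sum>y\<in>X. integral\<^sup>L P (indicator (B y)))"
    using Bochner_Integration.integral_sum[where I=X and M=P and f="\<lambda>y. indicator (B y)"] intB by simp
  also have "\<dots> = (\<Sum>y\<in>X. measure Pp (A y) ^ m)"
    by (rule sum.cong) (auto simp: Int_absorb2[OF sets.sets_into_space[OF B_meas]] B_mu)
  finally show ?thesis by (simp add: k_def X_def P_def Pp_def A_def T_def V_def)
qed



lemma uniform_sets:
  assumes fin: "finite V" and S: "S \<subseteq> {..<q::nat} \<rightarrow>\<^sub>E V"
  shows "S \<in> sets (PiM {..<q} (\<lambda>_. uniform_count_measure V))"
proof -
  have sing: "{x} \<in> sets (PiM {..<q} (\<lambda>_. uniform_count_measure V))" if "x \<in> {..<q} \<rightarrow>\<^sub>E V" for x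
  proof -
    have "{x} = PiE {..<q} (\<lambda>i. {x i})"
      using that by (auto simp: PiE_iff fun_eq_iff extensional_def) (metis lessThan_iff)
    also have "\<dots> \<in> sets (PiM {..<q} (\<lambda>_. uniform_count_measure V))"
      using that by (intro sets_PiM_I_finite) (auto simp: sets_uniform_count_measure)
    finally show ?thesis .
  qed
  have finS: "finite S" using S fin by (meson finite_PiE finite_lessThan finite_subset)
  have "S = (\<Union>x\<in>S. {x})" by blast
  also have "\<dots> \<in> sets (PiM {..<q} (\<lambda>_. uniform_count_measure V))"
    using finS S sing by (intro sets.finite_UN) auto
  finally show ?thesis .
qed

lemma uniform_measure:
  assumes fin: "finite V" and ne: "V \<noteq> {}" and S: "S \<subseteq> {..<q::nat} \<rightarrow>\<^sub>E V"
  shows "measure (PiM {..<q} (\<lambda>_. uniform_count_measure V)) S = real (card S) / real (card V) ^ q"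
proof -
  let ?U = "uniform_count_measure V"
  let ?P = "PiM {..<q} (\<lambda>_. ?U)"
  have Up: "prob_space ?U" by (rule prob_space_uniform_count_measure[OF fin ne])
  interpret PS: finite_product_sigma_finite "\<lambda>_. ?U" "{..<q}"
    by (intro finite_product_sigma_finite.intro product_sigma_finite.intro
        finite_product_sigma_finite_axioms.intro prob_space_imp_sigma_finite Up) simp
  interpret P: prob_space ?P by (intro prob_space_PiM Up)
  have cV: "card V > 0" using fin ne by (simp add: card_gt_0_iff)
  have sing: "measure ?P {x} = (1 / real (card V)) ^ q" if "x \<in> {..<q} \<rightarrow>\<^sub>E V" for x
  proof -
    have eq: "{x} = PiE {..<q} (\<lambda>i. {x i})"
      using that by (auto simp: PiE_iff fun_eq_iff extensional_def) (metis lessThan_iff)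
    have "emeasure ?P {x} = (\<Prod>i\<in>{..<q}. emeasure ?U {x i})"
      unfolding eq using that by (intro PS.measure_times) (auto simp: sets_uniform_count_measure)
    also have "\<dots> = (\<Prod>i\<in>{..<q}. ennreal (1 / real (card V)))"
      using that fin by (intro prod.cong refl) (auto simp: emeasure_uniform_count_measure PiE_iff)
    also have "\<dots> = ennreal ((1 / real (card V)) ^ q)"
      by (simp add: ennreal_power)
    finally show ?thesis by (simp add: measure_def)
  qed
  have finS: "finite S" using S fin by (meson finite_PiE finite_lessThan finite_subset)
  have "measure ?P S = (\<Sum>x\<in>S. measure ?P {x})"
    using finS S by (intro measure_eq_sum_singleton) (auto intro!: uniform_sets[OF fin])
  also have "\<dots> = (\<Sum>x\<in>S. (1 / real (card V)) ^ q)"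
    using S by (intro sum.cong refl sing) auto
  also have "\<dots> = real (card S) / real (card V) ^ q" by (simp add: power_one_over)
  finally show ?thesis .
qed

lemma stone_fin_measure:
  assumes fin: "finite V" and ne: "V \<noteq> {}"
  shows "stone_fin V E r p \<phi> = measure (PiM {..<p} (\<lambda>_. uniform_count_measure V)) (defset V E r p \<phi>)"
proof -
  have "measure (PiM {..<p} (\<lambda>_. uniform_count_measure V)) (defset V E r p \<phi>)
      = real (card (defset V E r p \<phi>)) / real (card V) ^ p"
    by (rule uniform_measure[OF fin ne]) (auto simp: defset_def)
  moreover have "p = 0 \<Longrightarrow> defset V E r p \<phi> = (if sat V E r (\<lambda>_. undefined) \<phi> then {\<lambda>_. undefined} else {})"
    by (auto simp: defset_def)
  ultimately show ?thesis by (auto simp: stone_fin_def)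
qed

lemma stone_mod_measure:
  assumes "prob_space M"
  shows "stone_mod M E r p \<phi> = measure (PiM {..<p} (\<lambda>_. M)) (defset (space M) E r p \<phi>)"
proof (cases "p = 0")
  case True
  have "defset (space M) E r p \<phi> = (if sat (space M) E r (\<lambda>_. undefined) \<phi> then {\<lambda>_. undefined} else {})"
    using True by (auto simp: defset_def)
  then show ?thesis using True by (simp add: stone_mod_def PiM_empty measure_count_space)
qed (simp add: stone_mod_def)



lemma max_pow_bounds:
  fixes f :: "'a \<Rightarrow> real"
  assumes fin: "finite Y" and ne: "Y \<noteq> {}" and nn: "\<And>y. y \<in> Y \<Longrightarrow> f y \<ge> 0"
  shows "Max (f ` Y) ^ m \<le> (\<Sum>y\<in>Y. f y ^ m)" "(\<Sum>y\<in>Y. f y ^ m) \<le> real (card Y) * Max (f ` Y) ^ m"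
proof -
  have "Max (f ` Y) \<in> f ` Y" using fin ne by (intro Max_in) auto
  then obtain y0 where y0: "y0 \<in> Y" "Max (f ` Y) = f y0" by blast
  show "Max (f ` Y) ^ m \<le> (\<Sum>y\<in>Y. f y ^ m)"
    unfolding y0(2) by (rule member_le_sum[OF y0(1)]) (use nn fin in auto)
  have "(\<Sum>y\<in>Y. f y ^ m) \<le> (\<Sum>y\<in>Y. Max (f ` Y) ^ m)"
    by (intro sum_mono power_mono) (use fin nn in auto)
  then show "(\<Sum>y\<in>Y. f y ^ m) \<le> real (card Y) * Max (f ` Y) ^ m" by simp
qed

lemma ex_pow_gap:
  fixes x y k :: real
  assumes "0 \<le> x" "x < y" "k \<ge> 1"
  shows "\<exists>m\<ge>1. k * x ^ m < y ^ m"
proof -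
  have y: "y > 0" using assms by simp
  obtain n where n: "(x / y) ^ n < 1 / k"
    using real_arch_pow_inv[of "1/k" "x/y"] assms y by auto
  have "n \<noteq> 0"
  proof
    assume "n = 0"
    then have "1 < 1 / k" using n by simp
    moreover have "1 / k \<le> 1" using assms(3) by simp
    ultimately show False by simp
  qed
  moreover have "k * x ^ n < y ^ n"
    using n y assms by (simp add: power_divide divide_simps mult.commute split: if_splits)
  ultimately show ?thesis by (intro exI[of _ n]) auto
qed

lemma max_conv:
  fixes b :: "nat \<Rightarrow> 'v \<Rightarrow> real" and a :: "'b \<Rightarrow> real"
  assumes finn: "\<And>n. finite (Xn n)" and fin: "finite X" and ne: "X \<noteq> {}"
    and card: "\<And>n. card (Xn n) = card X"
    and bnn: "\<And>n y. y \<in> Xn n \<Longrightarrow> b n y \<ge> 0" and ann: "\<And>y. y \<in> X \<Longrightarrow> a y \<ge> 0"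
    and conv: "\<And>m. m \<ge> 1 \<Longrightarrow> (\<lambda>n. \<Sum>y\<in>Xn n. b n y ^ m) \<longlonglongrightarrow> (\<Sum>y\<in>X. a y ^ m)"
  shows "(\<lambda>n. Max (b n ` Xn n)) \<longlonglongrightarrow> Max (a ` X)"
proof -
  define k where "k = real (card X)"
  have k1: "k \<ge> 1" using fin ne by (simp add: k_def Suc_le_eq card_gt_0_iff)
  have nen: "Xn n \<noteq> {}" for n using card[of n] fin ne by auto
  define A where "A = Max (a ` X)"
  have A0: "A \<ge> 0"
  proof -
    obtain y where "y \<in> X" using ne by blast
    then show ?thesis using ann[of y] fin unfolding A_def by (meson Max_ge finite_imageI image_eqI order_trans)
  qed
  have B0: "Max (b n ` Xn n) \<ge> 0" for n
  proof -
    obtain y where "y \<in> Xn n" using nen by blast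
    then show ?thesis using bnn[of y n] finn[of n] by (meson Max_ge finite_imageI image_eqI order_trans)
  qed
  show ?thesis
  proof (rule order_tendstoI)
    fix c assume c: "Max (a ` X) < c"
    obtain m where m: "m \<ge> 1" "k * A ^ m < c ^ m"
      using ex_pow_gap[OF A0 c[folded A_def] k1] by blast
    have "(\<Sum>y\<in>X. a y ^ m) < c ^ m" using max_pow_bounds(2)[of X a m, OF fin ne ann] m(2) by (simp add: k_def A_def)
    then have "eventually (\<lambda>n. (\<Sum>y\<in>Xn n. b n y ^ m) < c ^ m) sequentially"
      by (rule order_tendstoD(2)[OF conv[OF m(1)]])
    then show "eventually (\<lambda>n. Max (b n ` Xn n) < c) sequentially"
    proof (rule eventually_mono)
      fix n assume "(\<Sum>y\<in>Xn n. b n y ^ m) < c ^ m"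
      then have "Max (b n ` Xn n) ^ m < c ^ m" using max_pow_bounds(1)[of "Xn n" "b n" m, OF finn nen bnn] by linarith
      then show "Max (b n ` Xn n) < c" by (rule power_less_imp_less_base) (use A0 c A_def in simp)
    qed
  next
    fix c assume c: "c < Max (a ` X)"
    show "eventually (\<lambda>n. c < Max (b n ` Xn n)) sequentially"
    proof (cases "c < 0")
      case True
      have "c < Max (b n ` Xn n)" for n using B0[of n] True by linarith
      then show ?thesis by simp
    next
      case False
      then obtain m where m: "m \<ge> 1" "k * c ^ m < A ^ m"
        using ex_pow_gap[OF _ c[folded A_def] k1] by force
      have "k * c ^ m < (\<Sum>y\<in>X. a y ^ m)" using max_pow_bounds(1)[of X a m, OF fin ne ann] m(2) by (simp add: A_def)
      then have "eventually (\<lambda>n. k * c ^ m < (\<Sum>y\<in>Xn n. b n y ^ m)) sequentially"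
        by (rule order_tendstoD(1)[OF conv[OF m(1)]])
      then show ?thesis
      proof (rule eventually_mono)
        fix n assume h: "k * c ^ m < (\<Sum>y\<in>Xn n. b n y ^ m)"
        have "(\<Sum>y\<in>Xn n. b n y ^ m) \<le> k * Max (b n ` Xn n) ^ m"
          using max_pow_bounds(2)[of "Xn n" "b n" m, OF finn nen bnn] card[of n] by (simp add: k_def)
        then have "k * c ^ m < k * Max (b n ` Xn n) ^ m" using h by linarith
        then have "c ^ m < Max (b n ` Xn n) ^ m" using k1 by simp
        then show "c < Max (b n ` Xn n)"
          using power_mono[of "Max (b n ` Xn n)" c m] B0[of n] by force
      qed
    qed
  qed
qed



theorem lemma3:
  fixes V :: "nat \<Rightarrow> 'v set" and E :: "nat \<Rightarrow> 'v \<Rightarrow> 'v \<Rightarrow> bool"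
    and M :: "'b measure" and EL :: "'b \<Rightarrow> 'b \<Rightarrow> bool" and \<xi> :: fform
  assumes graphs: "\<And>n. finite (V n) \<and> V n \<noteq> {} \<and> is_graph (V n) (E n)"
    and conv: "FO_convergent V E"
    and lim: "modeling_limit V E M EL"
    and xi_form: "graph_formula \<xi>" "fv \<xi> \<subseteq> {0}"
    and xi_fin: "finite (defset1 (space M) EL undefined \<xi>)"
    and xi_ne: "defset1 (space M) EL undefined \<xi> \<noteq> {}"
    and xi_min: "\<And>chi. graph_formula chi \<Longrightarrow> fv chi \<subseteq> {0} \<Longrightarrow>
        defset1 (space M) EL undefined chi \<subseteq> defset1 (space M) EL undefined \<xi> \<Longrightarrow>
        defset1 (space M) EL undefined chi = {} \<or>
        defset1 (space M) EL undefined chi = defset1 (space M) EL undefined \<xi>"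
    and xi_card: "\<And>n. card (defset1 (V n) (E n) undefined \<xi>) = card (defset1 (space M) EL undefined \<xi>)"
  shows "\<forall>p \<phi>. fv \<phi> \<subseteq> {..<p} \<longrightarrow>
    (\<exists>rs r. (\<forall>n. rs n \<in> defset1 (V n) (E n) undefined \<xi>) \<and>
            r \<in> defset1 (space M) EL undefined \<xi> \<and>
            (\<lambda>n. stone_fin (V n) (E n) (rs n) p \<phi>) \<longlonglongrightarrow> stone_mod M EL r p \<phi>)"
proof (intro allI impI)
  fix p \<phi> assume phi: "fv \<phi> \<subseteq> {..<(p::nat)}"
  have modl: "modeling M EL" and limc: "\<And>q \<psi>. graph_formula \<psi> \<Longrightarrow> fv \<psi> \<subseteq> {..<q} \<Longrightarrow>
      (\<lambda>n. stone_fin (V n) (E n) undefined q \<psi>) \<longlonglongrightarrow> stone_mod M EL undefined q \<psi>"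
    using lim by (auto simp: modeling_limit_def)
  have Mp: "prob_space M" using modl by (simp add: modeling_def)
  have measL: "\<And>q \<psi>. graph_formula \<psi> \<Longrightarrow> fv \<psi> \<subseteq> {..<q} \<Longrightarrow>
      defset (space M) EL undefined q \<psi> \<in> sets (PiM {..<q} (\<lambda>_. M))"
    using modl by (simp add: modeling_def)
  define X where "X = defset1 (space M) EL undefined \<xi>"
  define Xn where "Xn = (\<lambda>n. defset1 (V n) (E n) undefined \<xi>)"
  define k where "k = card X"
  define b where "b = (\<lambda>n y. stone_fin (V n) (E n) y p \<phi>)"
  define a where "a = (\<lambda>y. stone_mod M EL y p \<phi>)"
  have finV: "finite (V n)" and neV: "V n \<noteq> {}" for n using graphs by auto
  have finXn: "finite (Xn n)" for n
    using finV[of n] by (rule finite_subset[rotated]) (auto simp: Xn_def defset1_def)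
  have finX: "finite X" using xi_fin by (simp add: X_def)
  have cardXn: "card (Xn n) = card X" for n using xi_card by (simp add: Xn_def X_def)
  have sumn: "(\<Sum>y\<in>Xn n. b n y ^ m) = (\<Sum>j\<in>{1..k}. stone_fin (V n) (E n) undefined (m*p) (theta p m j \<phi> \<xi>))"
    if m: "m \<ge> 1" for n m
  proof -
    let ?U = "uniform_count_measure (V n)"
    have Up: "prob_space ?U" by (rule prob_space_uniform_count_measure[OF finV neV])
    have measU: "defset (space ?U) (E n) undefined q \<psi> \<in> sets (PiM {..<q} (\<lambda>_. ?U))" for q \<psi>
      by (simp add: space_uniform_count_measure) (rule uniform_sets[OF finV], auto simp: defset_def)
    have "(\<Sum>y\<in>defset1 (space ?U) (E n) undefined \<xi>. measure (PiM {..<p} (\<lambda>_. ?U)) (defset (space ?U) (E n) y p \<phi>) ^ m)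
      = (\<Sum>j\<in>{1..card (defset1 (space ?U) (E n) undefined \<xi>)}.
         measure (PiM {..<m*p} (\<lambda>_. ?U)) (defset (space ?U) (E n) undefined (m*p) (theta p m j \<phi> \<xi>)))"
      by (rule power_sum_eq[OF Up measU xi_form _ phi m])
         (use finXn[of n] in \<open>simp add: space_uniform_count_measure Xn_def\<close>)
    then show ?thesis
      using cardXn[of n]
      by (simp add: space_uniform_count_measure stone_fin_measure[OF finV neV] b_def Xn_def k_def)
  qed
  have sumL: "(\<Sum>y\<in>X. a y ^ m) = (\<Sum>j\<in>{1..k}. stone_mod M EL undefined (m*p) (theta p m j \<phi> \<xi>))"
    if m: "m \<ge> 1" for m
    using power_sum_eq[OF Mp measL xi_form xi_fin phi m]
    by (simp add: stone_mod_measure[OF Mp] a_def X_def k_def)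
  have convm: "(\<lambda>n. \<Sum>y\<in>Xn n. b n y ^ m) \<longlonglongrightarrow> (\<Sum>y\<in>X. a y ^ m)" if m: "m \<ge> 1" for m
    unfolding sumn[OF m] sumL[OF m]
    by (intro tendsto_sum limc graph_theta[OF xi_form(1)] fv_theta[OF xi_form(2) phi])
  have bnn: "b n y \<ge> 0" for n y by (simp add: b_def stone_fin_measure[OF finV neV])
  have ann: "a y \<ge> 0" for y by (simp add: a_def stone_mod_measure[OF Mp])
  have maxc: "(\<lambda>n. Max (b n ` Xn n)) \<longlonglongrightarrow> Max (a ` X)"
    by (rule max_conv[OF finXn finX xi_ne[folded X_def] cardXn bnn ann convm])
  have nen: "Xn n \<noteq> {}" for n using cardXn[of n] finX xi_ne[folded X_def] by auto
  have exn: "\<exists>y. y \<in> Xn n \<and> b n y = Max (b n ` Xn n)" for n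
  proof -
    have "Max (b n ` Xn n) \<in> b n ` Xn n" using finXn nen by (intro Max_in) auto
    then show ?thesis by auto
  qed
  have ex: "\<exists>y. y \<in> X \<and> a y = Max (a ` X)"
  proof -
    have "Max (a ` X) \<in> a ` X" using finX xi_ne[folded X_def] by (intro Max_in) auto
    then show ?thesis by auto
  qed
  define rs where "rs = (\<lambda>n. SOME y. y \<in> Xn n \<and> b n y = Max (b n ` Xn n))"
  define r where "r = (SOME y. y \<in> X \<and> a y = Max (a ` X))"
  have rs: "rs n \<in> Xn n \<and> b n (rs n) = Max (b n ` Xn n)" for n
    unfolding rs_def by (rule someI_ex[OF exn])
  have r: "r \<in> X \<and> a r = Max (a ` X)"
    unfolding r_def by (rule someI_ex[OF ex])
  have "(\<lambda>n. stone_fin (V n) (E n) (rs n) p \<phi>) \<longlonglongrightarrow> stone_mod M EL r p \<phi>"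
    using maxc rs r by (simp add: b_def a_def)
  then show "\<exists>rs r. (\<forall>n. rs n \<in> defset1 (V n) (E n) undefined \<xi>) \<and>
            r \<in> defset1 (space M) EL undefined \<xi> \<and>
            (\<lambda>n. stone_fin (V n) (E n) (rs n) p \<phi>) \<longlonglongrightarrow> stone_mod M EL r p \<phi>"
    using rs r by (auto simp: Xn_def X_def)
qed

end
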